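(* Let $R>0$ and $\Theta=(\alpha,\rho_r,\rho_d,\rho_s,\rho_0,T)$ with $\alpha>1$, $\rho_r,\rho_d,\rho_s,\rho_0>0$ and $T>1$ an integer. If $$\rho_r+2\rho_0\ \ge\ \frac{\alpha}{1+\lfloor\sqrt T\rfloor}+\frac{\alpha(1+\lfloor\sqrt T\rfloor)}{\lfloor\sqrt T\rfloor}\Big(2^{\frac{R}{1-\lfloor\sqrt T\rfloor/T}}-1\Big),$$ then every maximizer $(M,K,\tau)$ of $\zeta_{zf}(M,K,\tau,R,\Theta)$ over integers with $1\le K\le\tau<T$, $M>K$ satisfies $M=2$ and $K=1$; i.e. $M^\star_{zf}(R,\Theta)=2$, $K^\star_{zf}(R,\Theta)=1$.
   Context: For $M>K$, $1\le K\le\tau<T$ let $$\gamma_u=\frac{K+\tau}{2\tau(M-K)}\Big(2^{\frac{R}{K(1-\tau/T)}}-1\Big)+\sqrt{\Big(\frac{K+\tau}{2\tau(M-K)}\Big(2^{\frac{R}{K(1-\tau/T)}}-1\Big)\Big)^2+\frac{2^{\frac{R}{K(1-\tau/T)}}-1}{\tau(M-K)}}$$ and define $\zeta_{zf}(M,K,\tau,R,\Theta)>0$ by $$\frac{R}{\zeta_{zf}(M,K,\tau,R,\Theta)}=\alpha K\gamma_u+\rho_s+K\Big(\rho_d+\frac{8K^2\rho_0}{3T}\Big)+M\Big(\rho_r+2K\rho_0+\frac{4K^2\rho_0}{T}\Big).$$ $(M^\star_{zf},K^\star_{zf},\tau^\star)$ denotes the maximizer of $\zeta_{zf}$ over integers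 with $1\le K\le\tau<T$, $M>K$. *)

theory Defs
  imports Complex_Main
begin

definition gamma_u :: "nat \<Rightarrow> nat \<Rightarrow> nat \<Rightarrow> real \<Rightarrow> nat \<Rightarrow> real" where
  "gamma_u M K \<tau> R T =
     (let e = 2 powr (R / (real K * (1 - real \<tau> / real T))) - 1;
          a = (real K + real \<tau>) / (2 * real \<tau> * (real M - real K)) * e
      in a + sqrt (a\<^sup>2 + e / (real \<tau> * (real M - real K))))"

definition zeta_zf ::
  "nat \<Rightarrow> nat \<Rightarrow> nat \<Rightarrow> real \<Rightarrow> real \<Rightarrow> real \<Rightarrow> real \<Rightarrow> real \<Rightarrow> real \<Rightarrow> nat \<Rightarrow> real" where
  "zeta_zf M K \<tau> R \<alpha> \<rho>r \<rho>d \<rho>s \<rho>0 T =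
     R / (\<alpha> * real K * gamma_u M K \<tau> R T + \<rho>s
          + real K * (\<rho>d + 8 * (real K)\<^sup>2 * \<rho>0 / (3 * real T))
          + real M * (\<rho>r + 2 * real K * \<rho>0 + 4 * (real K)\<^sup>2 * \<rho>0 / real T))"

definition feasible :: "nat \<Rightarrow> nat \<Rightarrow> nat \<Rightarrow> nat \<Rightarrow> bool" where
  "feasible T M K \<tau> \<longleftrightarrow> 1 \<le> K \<and> K \<le> \<tau> \<and> \<tau> < T \<and> K < M"

end

theory Submission
  imports Defs
begin

lemma gamma_pos:
  assumes "R > 0" "feasible T M K \<tau>"
  shows "gamma_u M K \<tau> R T > 0"
proof -
  from assms(2) have K: "real K \<ge> 1" "real K \<le> real \<tau>" "real \<tau> < real T" "real K < real M"
    by (auto simp: feasible_def)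
  have T: "real T > 0" using K by linarith
  have "1 - real \<tau> / real T > 0" using K T by (simp add: field_simps)
  hence "R / (real K * (1 - real \<tau> / real T)) > 0" using assms(1) K by simp
  hence e: "2 powr (R / (real K * (1 - real \<tau> / real T))) - 1 > 0"
    by (simp add: powr_less_cancel_iff[where x=2, of 0, simplified] )
  define e where "e = 2 powr (R / (real K * (1 - real \<tau> / real T))) - 1"
  define a where "a = (real K + real \<tau>) / (2 * real \<tau> * (real M - real K)) * e"
  have "a > 0" unfolding a_def using e K by (simp add: e_def)
  moreover have "sqrt (a\<^sup>2 + e / (real \<tau> * (real M - real K))) \<ge> 0"
    using e K unfolding e_def by simp
  ultimately show ?thesis unfolding gamma_u_def Let_def e_def[symmetric] a_def[symmetric] by linarith
qed

lemma sqrt_bound: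
  fixes a b :: real
  assumes "a > 0" "b \<ge> 0"
  shows "sqrt (a\<^sup>2 + b) \<le> a + b / (2 * a)"
proof -
  have "a\<^sup>2 + b \<le> (a + b / (2 * a))\<^sup>2"
    using assms by (simp add: power2_eq_square field_simps)
  hence "sqrt (a\<^sup>2 + b) \<le> sqrt ((a + b / (2 * a))\<^sup>2)" by (rule real_sqrt_le_mono)
  also have "\<dots> = a + b / (2 * a)" using assms by simp
  finally show ?thesis .
qed

lemma gamma_bound:
  fixes s :: nat
  assumes "R > 0" "s \<ge> 1" "s < T"
  shows "gamma_u 2 1 s R T \<le> 1 / (1 + real s) + (1 + real s) / real s * (2 powr (R / (1 - real s / real T)) - 1)"
proof -
  define e where "e = 2 powr (R / (1 - real s / real T)) - 1"
  have "1 - real s / real T > 0" using assms by (simp add: field_simps)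
  hence "R / (1 - real s / real T) > 0" using assms(1) by simp
  hence e: "e > 0" unfolding e_def
    by (simp add: powr_less_cancel_iff[where x=2, of 0, simplified])
  define a where "a = (1 + real s) / (2 * real s) * e"
  have a: "a > 0" using e assms unfolding a_def by simp
  have g: "gamma_u 2 1 s R T = a + sqrt (a\<^sup>2 + e / real s)"
    unfolding gamma_u_def Let_def e_def a_def by simp
  have "sqrt (a\<^sup>2 + e / real s) \<le> a + (e / real s) / (2 * a)"
    using sqrt_bound[OF a, of "e / real s"] e by simp
  also have "(e / real s) / (2 * a) = 1 / (1 + real s)"
  proof -
    have "e * (1 + real s) > 0" using e by simp
    thus ?thesis unfolding a_def using e assms by (simp add: field_simps)
  qed
  finally have "gamma_u 2 1 s R T \<le> 2 * a + 1 / (1 + real s)" using g by linarith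
  also have "2 * a = (1 + real s) / real s * e" unfolding a_def using assms by simp
  finally show ?thesis unfolding e_def by simp
qed

theorem theorem2:
  fixes R \<alpha> \<rho>r \<rho>d \<rho>s \<rho>0 :: real and T M K \<tau> :: nat
  assumes "R > 0" and "\<alpha> > 1" and "\<rho>r > 0" and "\<rho>d > 0" and "\<rho>s > 0" and "\<rho>0 > 0"
    and "T > 1"
    and "\<rho>r + 2 * \<rho>0 \<ge>
           \<alpha> / (1 + of_int \<lfloor>sqrt (real T)\<rfloor>)
         + \<alpha> * (1 + of_int \<lfloor>sqrt (real T)\<rfloor>) / of_int \<lfloor>sqrt (real T)\<rfloor>
           * (2 powr (R / (1 - of_int \<lfloor>sqrt (real T)\<rfloor> / real T)) - 1)"
    and "feasible T M K \<tau>"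
    and "\<forall>M' K' \<tau>'. feasible T M' K' \<tau>' \<longrightarrow>
           zeta_zf M' K' \<tau>' R \<alpha> \<rho>r \<rho>d \<rho>s \<rho>0 T \<le> zeta_zf M K \<tau> R \<alpha> \<rho>r \<rho>d \<rho>s \<rho>0 T"
  shows "M = 2 \<and> K = 1"
proof (rule ccontr)
  assume ne: "\<not> (M = 2 \<and> K = 1)"
  define s where "s = nat \<lfloor>sqrt (real T)\<rfloor>"
  have sq1: "sqrt (real T) \<ge> 1" using assms(7) by simp
  have fl: "of_int \<lfloor>sqrt (real T)\<rfloor> = real s"
    unfolding s_def using sq1 by simp
  have s1: "s \<ge> 1" unfolding s_def using sq1
    by (metis floor_mono floor_one nat_mono nat_one_as_int)
  have "sqrt (real T) < real T"
  proof -
    have "real T > 1" using assms(7) by simp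
    hence "sqrt 1 < sqrt (real T)" by (rule real_sqrt_less_mono)
    hence "sqrt (real T) > 1" by simp
    hence "sqrt (real T) * 1 < sqrt (real T) * sqrt (real T)"
      by (intro mult_strict_left_mono) auto
    thus ?thesis by simp
  qed
  hence "real s < real T" unfolding fl[symmetric] by linarith
  hence sT: "s < T" by simp
  have f21: "feasible T 2 1 s" using s1 sT by (simp add: feasible_def)
  define D where "D = (\<lambda>M K \<tau>. \<alpha> * real K * gamma_u M K \<tau> R T + \<rho>s
          + real K * (\<rho>d + 8 * (real K)\<^sup>2 * \<rho>0 / (3 * real T))
          + real M * (\<rho>r + 2 * real K * \<rho>0 + 4 * (real K)\<^sup>2 * \<rho>0 / real T))"
  have z: "\<And>M K \<tau>. zeta_zf M K \<tau> R \<alpha> \<rho>r \<rho>d \<rho>s \<rho>0 T = R / D M K \<tau>"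
    unfolding zeta_zf_def D_def by simp
  have Tp: "real T > 0" using assms(7) by simp
  have gb: "\<alpha> * gamma_u 2 1 s R T \<le> \<rho>r + 2 * \<rho>0"
  proof -
    have "\<alpha> * gamma_u 2 1 s R T \<le> \<alpha> * (1 / (1 + real s) + (1 + real s) / real s * (2 powr (R / (1 - real s / real T)) - 1))"
      using gamma_bound[OF assms(1) s1 sT] assms(2) by (simp add: mult_left_mono)
    also have "\<dots> = \<alpha> / (1 + real s) + \<alpha> * (1 + real s) / real s * (2 powr (R / (1 - real s / real T)) - 1)"
      by (simp add: algebra_simps)
    finally show ?thesis using assms(8) unfolding fl by linarith
  qed
  have D21: "D 2 1 s \<le> \<rho>s + \<rho>d + 8 * \<rho>0 / (3 * real T) + 3 * (\<rho>r + 2 * \<rho>0) + 8 * \<rho>0 / real T"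
    unfolding D_def using gb by simp
  have fM: "1 \<le> K" "K < M" using assms(9) by (auto simp: feasible_def)
  have gp: "gamma_u M K \<tau> R T > 0" by (rule gamma_pos[OF assms(1) assms(9)])
  have M3: "M \<ge> 3" using ne fM by linarith
  have Kr: "real K \<ge> 1" "real M \<ge> 3" using fM M3 by auto
  have t1: "\<alpha> * real K * gamma_u M K \<tau> R T > 0" using gp Kr assms(2) by simp
  have "real K * (\<rho>d + 8 * (real K)\<^sup>2 * \<rho>0 / (3 * real T)) \<ge> 1 * (\<rho>d + 8 * 1 * \<rho>0 / (3 * real T))"
  proof (rule mult_mono)
    have "(real K)\<^sup>2 \<ge> 1" using Kr by simp
    hence "8 * (real K)\<^sup>2 * \<rho>0 \<ge> 8 * 1 * \<rho>0" using assms(6) by simp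
    thus "\<rho>d + 8 * 1 * \<rho>0 / (3 * real T) \<le> \<rho>d + 8 * (real K)\<^sup>2 * \<rho>0 / (3 * real T)"
      using Tp by (simp add: divide_right_mono)
  qed (use Kr assms Tp in auto)
  moreover have "real M * (\<rho>r + 2 * real K * \<rho>0 + 4 * (real K)\<^sup>2 * \<rho>0 / real T) \<ge> 3 * (\<rho>r + 2 * 1 * \<rho>0 + 4 * 1 * \<rho>0 / real T)"
  proof (rule mult_mono)
    have "(real K)\<^sup>2 \<ge> 1" using Kr by simp
    hence "4 * (real K)\<^sup>2 * \<rho>0 \<ge> 4 * 1 * \<rho>0" using assms(6) by simp
    hence "4 * (real K)\<^sup>2 * \<rho>0 / real T \<ge> 4 * 1 * \<rho>0 / real T" using Tp by (simp add: divide_right_mono)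
    moreover have "2 * real K * \<rho>0 \<ge> 2 * 1 * \<rho>0" using Kr assms(6) by simp
    ultimately show "\<rho>r + 2 * 1 * \<rho>0 + 4 * 1 * \<rho>0 / real T \<le> \<rho>r + 2 * real K * \<rho>0 + 4 * (real K)\<^sup>2 * \<rho>0 / real T"
      by linarith
  qed (use Kr assms Tp in auto)
  ultimately have "D M K \<tau> > \<rho>s + \<rho>d + 8 * \<rho>0 / (3 * real T) + 3 * (\<rho>r + 2 * \<rho>0 + 4 * \<rho>0 / real T)"
    unfolding D_def using t1 by simp
  moreover have "8 * \<rho>0 / real T \<le> 12 * \<rho>0 / real T" using Tp assms(6) by (simp add: divide_right_mono)
  ultimately have lt: "D 2 1 s < D M K \<tau>" using D21 by (simp add: algebra_simps)
  have D21p: "D 2 1 s > 0"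
  proof -
    have "\<alpha> * gamma_u 2 1 s R T > 0" using gamma_pos[OF assms(1) f21] assms(2) by simp
    moreover have "32 * \<rho>0 / (3 * real T) > 0" using assms(6) Tp by simp
    moreover have "D 2 1 s = 32 * \<rho>0 / (3 * real T) + (\<alpha> * gamma_u 2 1 s R T +
             (\<rho>s + (\<rho>d + (2 * \<rho>r + 4 * \<rho>0))))"
      unfolding D_def by (simp add: field_simps)
    ultimately show ?thesis using assms by linarith
  qed
  have "R / D M K \<tau> < R / D 2 1 s"
    using lt D21p assms(1) by (simp add: divide_strict_left_mono)
  moreover have "R / D 2 1 s \<le> R / D M K \<tau>" using assms(10) f21 z by metis
  ultimately show False by simp
qed

end
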